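(* Let $k\geq1$, $n\geq2k$, let $\mathcal{S},\mathcal{T}$ be antichains in $\mathcal{F}_{2k}^{[1,n]}$ with $\mathcal{T}\prec_p\mathcal{S}$, and let $j\geq1$. For each $i\geq 1$ set $$D_i:=\Big(B\big(\mathcal{S}([i,i+1]),i+2\big)\setminus B\big(\mathcal{T}([i,i+1]),i+2\big)\Big)*\overline{[i,i+1]},$$ and for $1\leq\ell\leq k$ set $$\Gamma_{j,\ell}:=B\big(\mathcal{S}([j+1,j+2\ell]),j+2\ell+1\big)\setminus B\big(\mathcal{T}([j,j+2\ell-1]),j+2\ell+1\big).$$ If $D_{j+1}$ is not the void complex, then $$D_j\cap D_{j+1}=\bigcup_{\ell=1}^{k}\Big(\Gamma_{j,\ell}*\overline{[j+1,j+2\ell-1]}\Big).$$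
   Context: Notation: $[m,n]=\{m,\dots,n\}$; $d$-subsets of $[n]$ are identified with increasing vectors; $G\leq_p F$ means componentwise $\leq$ and $G\prec_p F$ means $G\leq_p F-\mathbf{1}_d$ ($\mathbf{1}_d$ the all-ones vector). For $r\geq1$, $\mathcal{F}_{2r}^{[m,n]}$ is the set of sets $\{i_1,i_1+1,\dots,i_r,i_r+1\}$ with $m\leq i_1$, $i_r\leq n-1$, $i_j\leq i_{j+1}-2$, ordered by $\leq_p$; $\mathcal{F}_0^{[m,n]}=\{\emptyset\}$. For antichains, $\mathcal{T}\prec_p\mathcal{S}$ means every $G\in\mathcal{T}$ satisfies $G\prec_p F$ for some $F\in\mathcal{S}$. $\mathcal{F}_{2r}(\mathcal{S})$ is the order ideal generated by $\mathcal{S}$. For $1\leq\ell\leq k$ and $J=[j,j+2\ell-1]$, $\mathcal{S}(J)\subseteq\mathcal{F}_{2(k-\ell)}^{[1,n]}$ is the set of maximal elements of $\{H\in\mathcal{F}_{2(k-\ell)}^{[1,n]}: H\subseteq[j+2\ell,n],\ J\cup H\in\mathcal{F}(\mathcal{S})\}$. $B(\mathcal{S}(J),m)$ is the pure simplicial complex whose facets are the sets of $\mathcal{F}_{2(k-\ell)}(\mathcal{S}(J))\cap\mathcal{F}_{2(k-\ell)}^{[m,n]}$. For pure complexes $X,Y$, $X\setminus Y$ is the complex generated by the facets of $X$ that are not facets of $Y$. $\overline{V}$ is the full simplex on $V$ ($\overline{\emptyset}=\{\emptyset\}$), $*$ is the join (the join with the void complex, which has no faces, is void). *)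

theory Defs
  imports Main
begin

text \<open>Subsets of [n] are finite nat sets; the i-th coordinate of the increasing
vector of a set is given by sorted_list_of_set.\<close>

definition leq_p :: "nat set \<Rightarrow> nat set \<Rightarrow> bool" where
  "leq_p G F \<longleftrightarrow> card G = card F \<and>
     (\<forall>t < card F. sorted_list_of_set G ! t \<le> sorted_list_of_set F ! t)"

text \<open>G \<prec>_p F means G \<le>_p F - 1, i.e. strictly smaller in every coordinate.\<close>
definition prec_p :: "nat set \<Rightarrow> nat set \<Rightarrow> bool" where
  "prec_p G F \<longleftrightarrow> card G = card F \<and>
     (\<forall>t < card F. sorted_list_of_set G ! t < sorted_list_of_set F ! t)"

text \<open>dom_fam r m n is F_{2r}^{[m,n]} (0-indexed starting points f 0, ..., f (r-1)).\<close>
definition dom_fam :: "nat \<Rightarrow> nat \<Rightarrow> nat \<Rightarrow> nat set set" where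
  "dom_fam r m n = {H. \<exists>f::nat \<Rightarrow> nat.
      (0 < r \<longrightarrow> m \<le> f 0 \<and> f (r - 1) + 1 \<le> n) \<and>
      (\<forall>i. i + 1 < r \<longrightarrow> f i + 2 \<le> f (i + 1)) \<and>
      H = (\<Union>i<r. {f i, f i + 1})}"

definition antichain_in :: "nat \<Rightarrow> nat \<Rightarrow> nat set set \<Rightarrow> bool" where
  "antichain_in k n A \<longleftrightarrow> A \<subseteq> dom_fam k 1 n \<and>
     (\<forall>F\<in>A. \<forall>G\<in>A. leq_p G F \<longrightarrow> G = F)"

definition prec_fam :: "nat set set \<Rightarrow> nat set set \<Rightarrow> bool" where
  "prec_fam T S \<longleftrightarrow> (\<forall>G\<in>T. \<exists>F\<in>S. prec_p G F)"

definition ideal_gen :: "nat \<Rightarrow> nat \<Rightarrow> nat set set \<Rightarrow> nat set set" where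
  "ideal_gen r n A = {H \<in> dom_fam r 1 n. \<exists>F\<in>A. leq_p H F}"

definition maximals_p :: "nat set set \<Rightarrow> nat set set" where
  "maximals_p X = {H \<in> X. \<forall>H'\<in>X. leq_p H H' \<longrightarrow> H' = H}"

text \<open>restr k n S j l = S(J) for J = [j, j+2l-1].\<close>
definition restr :: "nat \<Rightarrow> nat \<Rightarrow> nat set set \<Rightarrow> nat \<Rightarrow> nat \<Rightarrow> nat set set" where
  "restr k n S j l = maximals_p {H \<in> dom_fam (k - l) 1 n.
      H \<subseteq> {j + 2*l..n} \<and> {j..j + 2*l - 1} \<union> H \<in> ideal_gen k n S}"

text \<open>Simplicial complexes are represented by their set of faces.\<close>
definition closure_cx :: "nat set set \<Rightarrow> nat set set" where
  "closure_cx F = {\<sigma>. \<exists>\<tau>\<in>F. \<sigma> \<subseteq> \<tau>}"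

definition facets :: "nat set set \<Rightarrow> nat set set" where
  "facets X = {\<sigma> \<in> X. \<forall>\<tau>\<in>X. \<sigma> \<subseteq> \<tau> \<longrightarrow> \<tau> = \<sigma>}"

definition cdiff :: "nat set set \<Rightarrow> nat set set \<Rightarrow> nat set set" where
  "cdiff X Y = closure_cx (facets X - facets Y)"

definition join :: "nat set set \<Rightarrow> nat set set \<Rightarrow> nat set set" where
  "join X Y = {\<sigma> \<union> \<tau> | \<sigma> \<tau>. \<sigma> \<in> X \<and> \<tau> \<in> Y}"

definition simplex :: "nat set \<Rightarrow> nat set set" where
  "simplex V = Pow V"

text \<open>Bcx k n l A m = B(A, m) for A \<subseteq> F_{2(k-l)}^{[1,n]}.\<close>
definition Bcx :: "nat \<Rightarrow> nat \<Rightarrow> nat \<Rightarrow> nat set set \<Rightarrow> nat \<Rightarrow> nat set set" where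
  "Bcx k n l A m = closure_cx (ideal_gen (k - l) n A \<inter> dom_fam (k - l) m n)"

definition Dcx :: "nat \<Rightarrow> nat \<Rightarrow> nat set set \<Rightarrow> nat set set \<Rightarrow> nat \<Rightarrow> nat set set" where
  "Dcx k n S T i = join
     (cdiff (Bcx k n 1 (restr k n S i 1) (i + 2)) (Bcx k n 1 (restr k n T i 1) (i + 2)))
     (simplex {i..i + 1})"

definition Gamma :: "nat \<Rightarrow> nat \<Rightarrow> nat set set \<Rightarrow> nat set set \<Rightarrow> nat \<Rightarrow> nat \<Rightarrow> nat set set" where
  "Gamma k n S T j l =
     cdiff (Bcx k n l (restr k n S (j + 1) l) (j + 2*l + 1))
           (Bcx k n l (restr k n T j l) (j + 2*l + 1))"

end

theory Submission
  imports Defs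
begin


definition Dm :: "nat \<Rightarrow> (nat \<Rightarrow> nat) \<Rightarrow> nat set" where
  "Dm r f = (\<Union>i<r. {f i, f i + 1})"

definition gaps :: "nat \<Rightarrow> (nat \<Rightarrow> nat) \<Rightarrow> bool" where
  "gaps r f \<longleftrightarrow> (\<forall>i. i + 1 < r \<longrightarrow> f i + 2 \<le> f (i + 1))"

definition vld :: "nat \<Rightarrow> nat \<Rightarrow> nat \<Rightarrow> (nat \<Rightarrow> nat) \<Rightarrow> bool" where
  "vld r m n f \<longleftrightarrow> (0 < r \<longrightarrow> m \<le> f 0 \<and> f (r - 1) + 1 \<le> n) \<and> gaps r f"

definition lst :: "nat \<Rightarrow> (nat \<Rightarrow> nat) \<Rightarrow> nat list" where
  "lst r f = map (\<lambda>t. f (t div 2) + t mod 2) [0..<2*r]"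

lemma dom_fam_iff: "H \<in> dom_fam r m n \<longleftrightarrow> (\<exists>f. vld r m n f \<and> H = Dm r f)"
  unfolding dom_fam_def vld_def gaps_def Dm_def by auto

lemma gaps_mono: assumes "gaps r f" "u \<le> v" "v < r" shows "f u + 2 * (v - u) \<le> f v"
  using assms(2,3)
proof (induction v)
  case 0 then show ?case by simp
next
  case (Suc v)
  show ?case
  proof (cases "u = Suc v")
    case True then show ?thesis by simp
  next
    case False
    then have "u \<le> v" using Suc by simp
    then have "f u + 2 * (v - u) \<le> f v" using Suc by simp
    moreover have "f v + 2 \<le> f (Suc v)" using assms(1) Suc(3) unfolding gaps_def by (metis Suc_eq_plus1)
    ultimately show ?thesis using \<open>u \<le> v\<close> by (simp add: Suc_diff_le)
  qed
qed

lemma gaps_cong: "(\<And>t. t < r \<Longrightarrow> f t = g t) \<Longrightarrow> gaps r f = gaps r g"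
  unfolding gaps_def by auto

lemma vld_cong: "(\<And>t. t < r \<Longrightarrow> f t = g t) \<Longrightarrow> vld r m n f = vld r m n g"
  unfolding vld_def using gaps_cong[of r f g] by auto

lemma Dm_cong: "(\<And>t. t < r \<Longrightarrow> f t = g t) \<Longrightarrow> Dm r f = Dm r g"
  unfolding Dm_def by auto

lemma lst_length[simp]: "length (lst r f) = 2 * r" unfolding lst_def by simp

lemma lst_nth: "t < 2 * r \<Longrightarrow> lst r f ! t = f (t div 2) + t mod 2"
  unfolding lst_def by simp

lemma lst_set: "set (lst r f) = Dm r f"
proof
  show "set (lst r f) \<subseteq> Dm r f"
  proof
    fix x assume "x \<in> set (lst r f)"
    then obtain t where t: "t < 2*r" "x = f (t div 2) + t mod 2" unfolding lst_def by auto
    have "t div 2 < r" using t by simp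
    moreover have "t mod 2 = 0 \<or> t mod 2 = 1" by auto
    ultimately show "x \<in> Dm r f" unfolding Dm_def using t by auto
  qed
next
  show "Dm r f \<subseteq> set (lst r f)"
  proof
    fix x assume "x \<in> Dm r f"
    then obtain i where i: "i < r" "x = f i \<or> x = f i + 1" unfolding Dm_def by auto
    show "x \<in> set (lst r f)"
    proof (cases "x = f i")
      case True
      have "2*i < 2*r" using i by simp
      then show ?thesis unfolding lst_def using True by (auto intro!: image_eqI[of _ _ "2*i"])
    next
      case False
      then have "x = f i + 1" using i by auto
      have "2*i+1 < 2*r" using i by simp
      moreover have "(2*i+1) div 2 = i" "(2*i+1) mod 2 = 1" by auto
      ultimately show ?thesis unfolding lst_def using \<open>x = f i + 1\<close>
        by (auto intro!: image_eqI[of _ _ "2*i+1"])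
    qed
  qed
qed

lemma lst_step: assumes "gaps r f" "t + 1 < 2 * r" shows "lst r f ! t < lst r f ! (t + 1)"
proof (cases "even t")
  case True
  then obtain i where "t = 2*i" by auto
  then show ?thesis using assms by (simp add: lst_nth)
next
  case False
  then obtain i where ti: "t = 2*i+1" using oddE by blast
  have "i + 1 < r" using assms(2) ti by simp
  then have "f i + 2 \<le> f (i+1)" using assms(1) unfolding gaps_def by auto
  moreover have "(2*i+2) div 2 = i + 1" "(2*i+2) mod 2 = 0" by auto
  ultimately show ?thesis using assms ti by (simp add: lst_nth)
qed

lemma lst_sorted: assumes "gaps r f" shows "sorted_wrt (<) (lst r f)"
proof -
  have "lst r f ! u < lst r f ! v" if "u < v" "v < 2*r" for u v
    using that
  proof (induction v)
    case 0 then show ?case by simp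
  next
    case (Suc v)
    have st: "lst r f ! v < lst r f ! (v+1)" using lst_step[OF assms, of v] Suc by simp
    show ?case
    proof (cases "u = v")
      case True then show ?thesis using st by simp
    next
      case False then show ?thesis using Suc st by simp
    qed
  qed
  then show ?thesis by (simp add: sorted_wrt_iff_nth_less)
qed

lemma Dm_finite[simp]: "finite (Dm r f)" unfolding Dm_def by auto

lemma sl_Dm: assumes "gaps r f" shows "sorted_list_of_set (Dm r f) = lst r f"
  using lst_sorted[OF assms] lst_set[of r f]
  by (metis sorted_list_of_set.idem_if_sorted_distinct strict_sorted_iff)

lemma card_Dm: assumes "gaps r f" shows "card (Dm r f) = 2 * r"
proof -
  have "distinct (lst r f)" using lst_sorted[OF assms] strict_sorted_iff by blast
  then show ?thesis using lst_set[of r f] distinct_card by fastforce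
qed

lemma leq_p_Dm: assumes "gaps r f" "gaps r g"
  shows "leq_p (Dm r f) (Dm r g) \<longleftrightarrow> (\<forall>i<r. f i \<le> g i)"
proof
  assume "leq_p (Dm r f) (Dm r g)"
  then have h: "\<forall>t<2*r. lst r f ! t \<le> lst r g ! t"
    unfolding leq_p_def using sl_Dm[OF assms(1)] sl_Dm[OF assms(2)] card_Dm[OF assms(2)] by auto
  show "\<forall>i<r. f i \<le> g i"
  proof (intro allI impI)
    fix i assume "i < r"
    then have "2*i < 2*r" by simp
    then show "f i \<le> g i" using h[rule_format, of "2*i"] by (simp add: lst_nth)
  qed
next
  assume h: "\<forall>i<r. f i \<le> g i"
  show "leq_p (Dm r f) (Dm r g)"
    unfolding leq_p_def using sl_Dm[OF assms(1)] sl_Dm[OF assms(2)] card_Dm[OF assms(1)] card_Dm[OF assms(2)] h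
    by (auto simp: lst_nth)
qed

lemma prec_p_Dm: assumes "gaps r f" "gaps r g"
  shows "prec_p (Dm r f) (Dm r g) \<longleftrightarrow> (\<forall>i<r. f i < g i)"
proof
  assume "prec_p (Dm r f) (Dm r g)"
  then have h: "\<forall>t<2*r. lst r f ! t < lst r g ! t"
    unfolding prec_p_def using sl_Dm[OF assms(1)] sl_Dm[OF assms(2)] card_Dm[OF assms(2)] by auto
  show "\<forall>i<r. f i < g i"
  proof (intro allI impI)
    fix i assume "i < r"
    then have "2*i < 2*r" by simp
    then show "f i < g i" using h[rule_format, of "2*i"] by (simp add: lst_nth)
  qed
next
  assume h: "\<forall>i<r. f i < g i"
  show "prec_p (Dm r f) (Dm r g)"
    unfolding prec_p_def using sl_Dm[OF assms(1)] sl_Dm[OF assms(2)] card_Dm[OF assms(1)] card_Dm[OF assms(2)] h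
    by (auto simp: lst_nth)
qed

lemma Dm_inj: assumes "gaps r f" "gaps r g" "Dm r f = Dm r g" "i < r" shows "f i = g i"
  using leq_p_Dm[OF assms(1,2)] leq_p_Dm[OF assms(2,1)] assms(3,4)
  by (metis le_antisym leq_p_def order_refl)



lemma leq_p_trans: "leq_p A B \<Longrightarrow> leq_p B C \<Longrightarrow> leq_p A C"
  unfolding leq_p_def by (metis order_trans)

lemma Dm_sub: assumes "vld r m n f" shows "Dm r f \<subseteq> {m..n}"
proof
  fix x assume "x \<in> Dm r f"
  then obtain i where i: "i < r" "x = f i \<or> x = f i + 1" unfolding Dm_def by auto
  have g: "gaps r f" and b: "m \<le> f 0" "f (r - 1) + 1 \<le> n" using assms i unfolding vld_def by auto
  have "f 0 + 2 * (i - 0) \<le> f i" using gaps_mono[OF g, of 0 i] i by simp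
  moreover have "f i + 2 * (r - 1 - i) \<le> f (r - 1)" using gaps_mono[OF g, of i "r-1"] i by simp
  ultimately show "x \<in> {m..n}" using i b by auto
qed

lemma dom_mem: assumes "gaps r f" shows "Dm r f \<in> dom_fam r m n \<longleftrightarrow> vld r m n f"
proof
  assume "Dm r f \<in> dom_fam r m n"
  then obtain g where g: "vld r m n g" "Dm r f = Dm r g" using dom_fam_iff by blast
  have "\<And>t. t < r \<Longrightarrow> f t = g t" using Dm_inj[OF assms _ g(2)] g(1) unfolding vld_def by blast
  then show "vld r m n f" using vld_cong g(1) by blast
qed (auto simp: dom_fam_iff)

lemma vld_le: assumes "vld r m n p" "gaps r f" "0 < r \<Longrightarrow> m \<le> f 0" "\<forall>t<r. f t \<le> p t"
  shows "vld r m n f"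
  using assms unfolding vld_def by (metis diff_less le_trans less_numeral_extra(1) add_le_mono1)

lemma split_Dm: assumes "l \<le> k" shows "Dm k f = Dm l f \<union> Dm (k - l) (\<lambda>t. f (t + l))"
proof -
  have "Dm k f = (\<Union>i<k. {f i, f i + 1})" by (simp add: Dm_def)
  also have "{..<k} = {..<l} \<union> (\<lambda>t. t + l) ` {..<k-l}"
  proof
    show "{..<k} \<subseteq> {..<l} \<union> (\<lambda>t. t + l) ` {..<k - l}"
    proof
      fix x assume "x \<in> {..<k}"
      show "x \<in> {..<l} \<union> (\<lambda>t. t + l) ` {..<k - l}"
      proof (cases "x < l")
        case False then have "x = (x - l) + l" "x - l < k - l" using \<open>x \<in> {..<k}\<close> by auto
        then show ?thesis by blast
      qed simp
    qed
  qed (use assms in auto)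
  finally show ?thesis by (auto simp: Dm_def)
qed

lemma block_Dm: assumes "1 \<le> l" "\<forall>t<l. f t = i + 2 * t" shows "Dm l f = {i..i + 2 * l - 1}"
proof
  show "Dm l f \<subseteq> {i..i + 2 * l - 1}"
    using assms unfolding Dm_def by auto
next
  show "{i..i + 2 * l - 1} \<subseteq> Dm l f"
  proof
    fix x assume x: "x \<in> {i..i + 2 * l - 1}"
    define t where "t = (x - i) div 2"
    have "t < l" using x assms(1) unfolding t_def by auto
    moreover have "x = f t \<or> x = f t + 1" using assms(2) \<open>t < l\<close> x unfolding t_def by auto
    ultimately show "x \<in> Dm l f" unfolding Dm_def by auto
  qed
qed

lemma inI: assumes "X \<subseteq> dom_fam k 1 n" "gaps k f"
  shows "Dm k f \<in> ideal_gen k n X \<longleftrightarrow>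
     vld k 1 n f \<and> (\<exists>g. vld k 1 n g \<and> Dm k g \<in> X \<and> (\<forall>t<k. f t \<le> g t))"
proof
  assume h: "Dm k f \<in> ideal_gen k n X"
  then obtain F where F: "F \<in> X" "leq_p (Dm k f) F" unfolding ideal_gen_def by auto
  obtain g where g: "vld k 1 n g" "F = Dm k g" using F(1) assms(1) dom_fam_iff by blast
  have "gaps k g" using g(1) unfolding vld_def by auto
  then show "vld k 1 n f \<and> (\<exists>g. vld k 1 n g \<and> Dm k g \<in> X \<and> (\<forall>t<k. f t \<le> g t))"
    using h dom_mem[OF assms(2)] F g leq_p_Dm[OF assms(2)] unfolding ideal_gen_def by auto
next
  assume "vld k 1 n f \<and> (\<exists>g. vld k 1 n g \<and> Dm k g \<in> X \<and> (\<forall>t<k. f t \<le> g t))"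
  then obtain g where g: "vld k 1 n f" "vld k 1 n g" "Dm k g \<in> X" "\<forall>t<k. f t \<le> g t" by blast
  have "gaps k g" using g(2) unfolding vld_def by auto
  then have "leq_p (Dm k f) (Dm k g)" using leq_p_Dm[OF assms(2)] g(4) by blast
  moreover have "Dm k f \<in> dom_fam k 1 n" using g(1) dom_mem[OF assms(2)] by blast
  ultimately show "Dm k f \<in> ideal_gen k n X"
    using g(3) unfolding ideal_gen_def by blast
qed

lemma ideal_mono: assumes "X \<subseteq> dom_fam k 1 n" "gaps k f" "gaps k g" "0 < k \<Longrightarrow> 1 \<le> f 0"
  "Dm k g \<in> ideal_gen k n X" "\<forall>t<k. f t \<le> g t"
  shows "Dm k f \<in> ideal_gen k n X"
proof -
  obtain h where h: "vld k 1 n g" "vld k 1 n h" "Dm k h \<in> X" "\<forall>t<k. g t \<le> h t"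
    using inI[OF assms(1,3)] assms(5) by blast
  have "vld k 1 n f" using vld_le[OF h(1) assms(2) assms(4) assms(6)] by simp
  then show ?thesis using inI[OF assms(1,2)] h assms(6) by (meson order_trans)
qed

lemma facets_closure: assumes "\<forall>\<tau>\<in>A. finite \<tau> \<and> card \<tau> = c"
  shows "facets (closure_cx A) = A"
proof
  show "facets (closure_cx A) \<subseteq> A"
    unfolding facets_def closure_cx_def by blast
next
  show "A \<subseteq> facets (closure_cx A)"
  proof
    fix \<tau> assume t: "\<tau> \<in> A"
    have "\<rho> = \<tau>" if r1: "\<rho> \<in> closure_cx A" and r2: "\<tau> \<subseteq> \<rho>" for \<rho>
    proof -
      obtain \<tau>' where tt: "\<tau>' \<in> A" "\<rho> \<subseteq> \<tau>'" using r1 unfolding closure_cx_def by blast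
      then have "\<tau> = \<tau>'" using assms t r2 by (metis card_subset_eq order_trans)
      then show ?thesis using r2 tt by blast
    qed
    then show "\<tau> \<in> facets (closure_cx A)" unfolding facets_def closure_cx_def using t by blast
  qed
qed

lemma cdiff_closure: assumes "\<forall>\<tau>\<in>A \<union> B. finite \<tau> \<and> card \<tau> = c"
  shows "cdiff (closure_cx A) (closure_cx B) = closure_cx (A - B)"
  unfolding cdiff_def using facets_closure[of A c] facets_closure[of B c] assms by auto

lemma join_closure: "join (closure_cx A) (simplex V) = closure_cx ((\<lambda>H. H \<union> V) ` A)"
proof
  show "join (closure_cx A) (simplex V) \<subseteq> closure_cx ((\<lambda>H. H \<union> V) ` A)"
  proof
    fix x assume "x \<in> join (closure_cx A) (simplex V)"
    then obtain s t where st: "x = s \<union> t" "s \<in> closure_cx A" "t \<in> simplex V"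
      unfolding join_def by blast
    obtain H where H: "H \<in> A" "s \<subseteq> H" using st(2) unfolding closure_cx_def by blast
    have "t \<subseteq> V" using st(3) unfolding simplex_def by simp
    then have "x \<subseteq> H \<union> V" using st H by blast
    then show "x \<in> closure_cx ((\<lambda>H. H \<union> V) ` A)" unfolding closure_cx_def using H(1) by blast
  qed
next
  show "closure_cx ((\<lambda>H. H \<union> V) ` A) \<subseteq> join (closure_cx A) (simplex V)"
  proof
    fix \<sigma> assume "\<sigma> \<in> closure_cx ((\<lambda>H. H \<union> V) ` A)"
    then obtain H where H: "H \<in> A" "\<sigma> \<subseteq> H \<union> V" unfolding closure_cx_def by blast
    have e: "\<sigma> = (\<sigma> - V) \<union> (\<sigma> \<inter> V)" by blast
    have a: "\<sigma> - V \<in> closure_cx A" using H unfolding closure_cx_def by blast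
    have b: "\<sigma> \<inter> V \<in> simplex V" unfolding simplex_def by blast
    show "\<sigma> \<in> join (closure_cx A) (simplex V)" unfolding join_def using e a b by blast
  qed
qed

lemma mem_closure_image: "\<sigma> \<in> closure_cx ((\<lambda>H. H \<union> V) ` A) \<longleftrightarrow> (\<exists>H\<in>A. \<sigma> \<subseteq> H \<union> V)"
  unfolding closure_cx_def by blast



definition cat :: "nat \<Rightarrow> nat \<Rightarrow> (nat \<Rightarrow> nat) \<Rightarrow> nat \<Rightarrow> nat" where
  "cat j l h = (\<lambda>t. if t < l then j + 2 * t else h (t - l))"

lemma cat_Dm: assumes "1 \<le> l" "l \<le> k" shows "Dm k (cat j l h) = {j..j + 2 * l - 1} \<union> Dm (k - l) h"
proof -
  have "Dm k (cat j l h) = Dm l (cat j l h) \<union> Dm (k - l) (\<lambda>t. cat j l h (t + l))"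
    using split_Dm[OF assms(2)] by blast
  moreover have "Dm l (cat j l h) = {j..j + 2 * l - 1}" using block_Dm[OF assms(1)] by (simp add: cat_def)
  moreover have "(\<lambda>t. cat j l h (t + l)) = h" by (simp add: cat_def)
  ultimately show ?thesis by simp
qed

lemma cat_gaps: assumes "gaps (k - l) h" "l < k \<Longrightarrow> j + 2 * l \<le> h 0"
  shows "gaps k (cat j l h)"
  unfolding gaps_def
proof (intro allI impI)
  fix i assume i: "i + 1 < k"
  show "cat j l h i + 2 \<le> cat j l h (i + 1)"
  proof (cases "i + 1 < l")
    case True then show ?thesis by (simp add: cat_def)
  next
    case False
    show ?thesis
    proof (cases "i + 1 = l")
      case True then show ?thesis using assms(2) i by (simp add: cat_def)
    next
      case False
      then have "i \<ge> l" using \<open>\<not> i + 1 < l\<close> by simp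
      then have "(i - l) + 1 < k - l" "i + 1 - l = (i - l) + 1" using i by auto
      then show ?thesis using assms(1) \<open>i \<ge> l\<close> unfolding gaps_def cat_def by auto
    qed
  qed
qed

lemma vld_gaps: "vld r m n f \<Longrightarrow> gaps r f" unfolding vld_def by simp

lemma vld_m_mono: "vld r m n f \<Longrightarrow> m' \<le> m \<Longrightarrow> vld r m' n f" unfolding vld_def by auto

lemma sum_list_less: "length xs = length ys \<Longrightarrow> \<forall>i<length xs. xs ! i \<le> ys ! i \<Longrightarrow> xs \<noteq> ys
  \<Longrightarrow> sum_list xs < (sum_list ys :: nat)"
proof (induction xs arbitrary: ys)
  case Nil then show ?case by simp
next
  case (Cons x xs)
  then obtain y ys' where ys: "ys = y # ys'" by (cases ys) auto
  have le: "x \<le> y" using Cons(3) ys by force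
  have le2: "\<forall>i<length xs. xs ! i \<le> ys' ! i" using Cons(3) ys by force
  have len: "length xs = length ys'" using Cons(2) ys by simp
  show ?case
  proof (cases "xs = ys'")
    case True then have "x \<noteq> y" using Cons(4) ys by simp
    then show ?thesis using le True ys by simp
  next
    case False then have "sum_list xs < sum_list ys'" using Cons.IH len le2 by blast
    then show ?thesis using le ys by simp
  qed
qed

definition mu :: "nat set \<Rightarrow> nat" where "mu A = sum_list (sorted_list_of_set A)"

lemma mu_less: assumes "leq_p A B" "A \<noteq> B" "finite A" "finite B" shows "mu A < mu B"
proof -
  have "sorted_list_of_set A \<noteq> sorted_list_of_set B"
    using assms(2-4) by (metis sorted_list_of_set.set_sorted_key_list_of_set)
  then show ?thesis unfolding mu_def using assms(1) sum_list_less unfolding leq_p_def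
    by (metis sorted_list_of_set.length_sorted_key_list_of_set)
qed

lemma leq_p_refl: "leq_p A A" unfolding leq_p_def by simp

lemma exists_maximal: assumes "finite Xs" "H \<in> Xs" "\<forall>A\<in>Xs. finite A"
  shows "\<exists>H'\<in>maximals_p Xs. leq_p H H'"
proof -
  let ?P = "\<lambda>H'. H' \<in> Xs \<and> leq_p H H'"
  have "\<forall>y. ?P y \<longrightarrow> mu y < Suc (Max (mu ` Xs))"
    using assms(1) by (simp add: le_imp_less_Suc)
  then obtain H' where H': "?P H'" "\<forall>y. ?P y \<longrightarrow> mu y \<le> mu H'"
    using ex_has_greatest_nat[of ?P H mu] assms(2) leq_p_refl by blast
  have "H' \<in> maximals_p Xs"
    unfolding maximals_p_def
  proof (intro CollectI conjI ballI impI)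
    fix H'' assume h: "H'' \<in> Xs" "leq_p H' H''"
    then have "?P H''" using H'(1) leq_p_trans by blast
    then have "mu H'' \<le> mu H'" using H'(2) by blast
    then show "H'' = H'" using mu_less[OF h(2)] assms(3) h(1) H'(1) by fastforce
  qed (use H' in blast)
  then show ?thesis using H' by blast
qed

lemma BR: assumes X: "X \<subseteq> dom_fam k 1 n" and l: "1 \<le> l" "l \<le> k" and j: "1 \<le> j" and m: "j + 2 * l \<le> m"
  shows "ideal_gen (k - l) n (restr k n X j l) \<inter> dom_fam (k - l) m n =
     {H \<in> dom_fam (k - l) m n. {j..j + 2 * l - 1} \<union> H \<in> ideal_gen k n X}"
proof -
  define Xs where "Xs = {H \<in> dom_fam (k - l) 1 n.
      H \<subseteq> {j + 2*l..n} \<and> {j..j + 2*l - 1} \<union> H \<in> ideal_gen k n X}"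
  have R: "restr k n X j l = maximals_p Xs" unfolding restr_def Xs_def by simp
  have mono: "{j..j + 2*l - 1} \<union> H \<in> ideal_gen k n X"
    if H: "H \<in> dom_fam (k - l) 1 n" "H \<subseteq> {j + 2*l..n}" and H': "H' \<in> Xs" and le: "leq_p H H'" for H H'
  proof -
    obtain h where h: "vld (k - l) 1 n h" "H = Dm (k - l) h" using H(1) dom_fam_iff by blast
    obtain h' where h': "vld (k - l) 1 n h'" "H' = Dm (k - l) h'" using H' dom_fam_iff unfolding Xs_def by blast
    have H'sub: "H' \<subseteq> {j + 2*l..n}" using H' unfolding Xs_def by blast
    have h0: "j + 2 * l \<le> h 0" if "l < k"
    proof -
      have "h 0 \<in> H" using h(2) that unfolding Dm_def by auto
      then show ?thesis using H(2) by auto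
    qed
    have h0': "j + 2 * l \<le> h' 0" if "l < k"
    proof -
      have "h' 0 \<in> H'" using h'(2) that unfolding Dm_def by auto
      then show ?thesis using H'sub by auto
    qed
    have g: "gaps k (cat j l h)" using cat_gaps[of k l h j] h0 vld_gaps[OF h(1)] by blast
    have g': "gaps k (cat j l h')" using cat_gaps[of k l h' j] h0' vld_gaps[OF h'(1)] by blast
    have hle: "\<forall>i<k - l. h i \<le> h' i" using le h h' leq_p_Dm vld_gaps by metis
    have cle: "\<forall>t<k. cat j l h t \<le> cat j l h' t" using hle unfolding cat_def by auto
    have "Dm k (cat j l h') \<in> ideal_gen k n X" using H' h'(2) cat_Dm[OF l, of j h'] unfolding Xs_def by simp
    then have "Dm k (cat j l h) \<in> ideal_gen k n X"
      using ideal_mono[OF X g g' _ _ cle] j l(1) by (simp add: cat_def)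
    then show ?thesis using cat_Dm[OF l, of j h] h(2) by simp
  qed
  have finXs: "finite Xs"
  proof -
    have "Xs \<subseteq> Pow {1..n}" unfolding Xs_def using Dm_sub dom_fam_iff by fastforce
    then show ?thesis by (meson finite_Pow_iff finite_atLeastAtMost finite_subset)
  qed
  have finA: "\<forall>A\<in>Xs. finite A" unfolding Xs_def using dom_fam_iff Dm_finite by fastforce
  show ?thesis
  proof (intro equalityI subsetI)
    fix H assume "H \<in> ideal_gen (k - l) n (restr k n X j l) \<inter> dom_fam (k - l) m n"
    then obtain H' where H: "H \<in> dom_fam (k - l) 1 n" "H \<in> dom_fam (k - l) m n"
       "H' \<in> Xs" "leq_p H H'" unfolding ideal_gen_def R maximals_p_def by blast
    have "H \<subseteq> {j + 2*l..n}" using H(2) Dm_sub dom_fam_iff m by fastforce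
    then show "H \<in> {H \<in> dom_fam (k - l) m n. {j..j + 2 * l - 1} \<union> H \<in> ideal_gen k n X}"
      using mono[OF H(1) _ H(3,4)] H(2) by blast
  next
    fix H assume H: "H \<in> {H \<in> dom_fam (k - l) m n. {j..j + 2 * l - 1} \<union> H \<in> ideal_gen k n X}"
    have sub: "H \<subseteq> {j + 2*l..n}" using H Dm_sub dom_fam_iff m by fastforce
    have H1: "H \<in> dom_fam (k - l) 1 n" using H dom_fam_iff vld_m_mono j m
      by (metis (no_types, lifting) mem_Collect_eq le_add1 order_trans)
    have "H \<in> Xs" unfolding Xs_def using H1 sub H by blast
    then obtain H' where "H' \<in> maximals_p Xs" "leq_p H H'" using exists_maximal finXs finA by blast
    then show "H \<in> ideal_gen (k - l) n (restr k n X j l) \<inter> dom_fam (k - l) m n"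
      unfolding ideal_gen_def R using H1 H by blast
  qed
qed



lemma dom_card: "\<forall>\<tau>\<in>A \<union> B. finite \<tau> \<and> card \<tau> = 2 * r" if "A \<subseteq> dom_fam r m n" "B \<subseteq> dom_fam r m' n"
  using that dom_fam_iff card_Dm vld_gaps Dm_finite by (smt (verit, ccfv_threshold) Un_iff subset_iff)

lemma Dcx_mem: assumes S: "S \<subseteq> dom_fam k 1 n" and T: "T \<subseteq> dom_fam k 1 n" and k: "1 \<le> k" and i: "1 \<le> i"
  shows "\<sigma> \<in> Dcx k n S T i \<longleftrightarrow> (\<exists>H. H \<in> dom_fam (k - 1) (i + 2) n \<and>
     {i..i + 2*1 - 1} \<union> H \<in> ideal_gen k n S \<and> {i..i + 2*1 - 1} \<union> H \<notin> ideal_gen k n T \<and> \<sigma> \<subseteq> H \<union> {i..i + 1})"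
proof -
  have bS: "Bcx k n 1 (restr k n S i 1) (i + 2) = closure_cx {H \<in> dom_fam (k - 1) (i + 2) n. {i..i + 2 * 1 - 1} \<union> H \<in> ideal_gen k n S}"
    unfolding Bcx_def using BR[OF S _ k i, of "i + 2"] by simp
  have bT: "Bcx k n 1 (restr k n T i 1) (i + 2) = closure_cx {H \<in> dom_fam (k - 1) (i + 2) n. {i..i + 2 * 1 - 1} \<union> H \<in> ideal_gen k n T}"
    unfolding Bcx_def using BR[OF T _ k i, of "i + 2"] by simp
  have cd: "cdiff (Bcx k n 1 (restr k n S i 1) (i + 2)) (Bcx k n 1 (restr k n T i 1) (i + 2)) =
     closure_cx ({H \<in> dom_fam (k - 1) (i + 2) n. {i..i + 2 * 1 - 1} \<union> H \<in> ideal_gen k n S} -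
                 {H \<in> dom_fam (k - 1) (i + 2) n. {i..i + 2 * 1 - 1} \<union> H \<in> ideal_gen k n T})"
    unfolding bS bT by (rule cdiff_closure[OF dom_card]) auto
  show ?thesis unfolding Dcx_def cd join_closure mem_closure_image by blast
qed

lemma Gamma_mem: assumes S: "S \<subseteq> dom_fam k 1 n" and T: "T \<subseteq> dom_fam k 1 n" and l: "1 \<le> l" "l \<le> k" and j: "1 \<le> j"
  shows "\<sigma> \<in> join (Gamma k n S T j l) (simplex {j + 1..j + 2*l - 1}) \<longleftrightarrow> (\<exists>H. H \<in> dom_fam (k - l) (j + 2*l + 1) n \<and>
     {j + 1..j + 1 + 2*l - 1} \<union> H \<in> ideal_gen k n S \<and> {j..j + 2*l - 1} \<union> H \<notin> ideal_gen k n T \<and> \<sigma> \<subseteq> H \<union> {j + 1..j + 2*l - 1})"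
proof -
  have bS: "Bcx k n l (restr k n S (j + 1) l) (j + 2*l + 1) = closure_cx {H \<in> dom_fam (k - l) (j + 2*l + 1) n. {j + 1..j + 1 + 2 * l - 1} \<union> H \<in> ideal_gen k n S}"
    unfolding Bcx_def using BR[OF S l, of "j + 1" "j + 2*l + 1"] by simp
  have bT: "Bcx k n l (restr k n T j l) (j + 2*l + 1) = closure_cx {H \<in> dom_fam (k - l) (j + 2*l + 1) n. {j..j + 2 * l - 1} \<union> H \<in> ideal_gen k n T}"
    unfolding Bcx_def using BR[OF T l j, of "j + 2*l + 1"] by simp
  have cd: "Gamma k n S T j l =
     closure_cx ({H \<in> dom_fam (k - l) (j + 2*l + 1) n. {j + 1..j + 1 + 2 * l - 1} \<union> H \<in> ideal_gen k n S} -
                 {H \<in> dom_fam (k - l) (j + 2*l + 1) n. {j..j + 2 * l - 1} \<union> H \<in> ideal_gen k n T})"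
    unfolding Gamma_def bS bT by (rule cdiff_closure[OF dom_card]) auto
  show ?thesis unfolding cd join_closure mem_closure_image by blast
qed



definition runlen :: "nat \<Rightarrow> nat \<Rightarrow> (nat \<Rightarrow> nat) \<Rightarrow> nat" where
  "runlen j k q = (LEAST s. s = k \<or> q s \<noteq> j + 2 * s)"

definition shr :: "nat \<Rightarrow> nat \<Rightarrow> (nat \<Rightarrow> nat) \<Rightarrow> nat \<Rightarrow> nat" where
  "shr j k q = (\<lambda>t. if t < runlen j k q then q t + 1 else q t)"

lemma runlen_props:
  shows "runlen j k q \<le> k" "\<And>t. t < runlen j k q \<Longrightarrow> q t = j + 2 * t"
    "runlen j k q < k \<Longrightarrow> q (runlen j k q) \<noteq> j + 2 * runlen j k q"
proof -
  have ex: "\<exists>s. s = k \<or> q s \<noteq> j + 2 * s" by blast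
  show "runlen j k q \<le> k" unfolding runlen_def by (rule Least_le) simp
  show "\<And>t. t < runlen j k q \<Longrightarrow> q t = j + 2 * t"
    unfolding runlen_def using not_less_Least by fastforce
  show "runlen j k q < k \<Longrightarrow> q (runlen j k q) \<noteq> j + 2 * runlen j k q"
    unfolding runlen_def using LeastI_ex[OF ex] by auto
qed

lemma runlen_pos: assumes "q 0 = j" "1 \<le> k" shows "1 \<le> runlen j k q"
proof (rule ccontr)
  assume "\<not> 1 \<le> runlen j k q"
  then have "runlen j k q = 0" by simp
  then show False using runlen_props(3)[of j k q] assms by simp
qed

lemma runlen_eq: assumes "s \<le> k" "\<forall>t<s. q t = j + 2 * t" "s < k \<Longrightarrow> q s \<noteq> j + 2 * s"
  shows "runlen j k q = s"
  unfolding runlen_def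
proof (rule Least_equality)
  show "s = k \<or> q s \<noteq> j + 2 * s" using assms by (cases "s = k") auto
next
  fix y assume "y = k \<or> q y \<noteq> j + 2 * y"
  then show "s \<le> y" using assms by (metis not_le)
qed

lemma gaps_lb: assumes "gaps k q" "t < k" shows "q 0 + 2 * t \<le> q t"
  using gaps_mono[OF assms(1), of 0 t] assms(2) by simp

lemma shr_gaps: assumes "gaps k q" "q 0 = j" shows "gaps k (shr j k q)"
  unfolding gaps_def
proof (intro allI impI)
  fix i assume i: "i + 1 < k"
  let ?s = "runlen j k q"
  have gi: "q i + 2 \<le> q (i + 1)" using assms(1) i unfolding gaps_def by blast
  show "shr j k q i + 2 \<le> shr j k q (i + 1)"
  proof (cases "i + 1 < ?s")
    case True then show ?thesis using gi by (simp add: shr_def)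
  next
    case False
    show ?thesis
    proof (cases "i + 1 = ?s")
      case True
      have "q i = j + 2 * i" using runlen_props(2)[of i j k q] True by simp
      moreover have "q (i + 1) \<noteq> j + 2 * (i + 1)" using runlen_props(3)[of j k q] True i by simp
      ultimately show ?thesis using gi True by (simp add: shr_def)
    next
      case False then show ?thesis using gi \<open>\<not> i + 1 < ?s\<close> by (simp add: shr_def)
    qed
  qed
qed

lemma min_gaps: assumes "gaps r f" "gaps r g" shows "gaps r (\<lambda>t. min (f t) (g t))"
  unfolding gaps_def
proof (intro allI impI)
  fix i assume i: "i + 1 < r"
  have "f i + 2 \<le> f (i + 1)" "g i + 2 \<le> g (i + 1)" using assms i unfolding gaps_def by auto
  then show "min (f i) (g i) + 2 \<le> min (f (i + 1)) (g (i + 1))" by (auto simp: min_def)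
qed

lemma min_Dm: assumes gf: "gaps r f" and gg: "gaps r g" and x: "x \<in> Dm r f" "x \<in> Dm r g"
  shows "x \<in> Dm r (\<lambda>t. min (f t) (g t))"
proof -
  obtain u where u: "u < r" "x = f u \<or> x = f u + 1" using x(1) unfolding Dm_def by auto
  obtain v where v: "v < r" "x = g v \<or> x = g v + 1" using x(2) unfolding Dm_def by auto
  show ?thesis
  proof (cases "u = v")
    case True
    then have "min (f v) (g v) = x \<or> min (f v) (g v) + 1 = x" using u v by auto
    then show ?thesis using v(1) unfolding Dm_def by auto
  next
    case False
    show ?thesis
    proof (cases "u < v")
      case True
      have "f u + 2 * (v - u) \<le> f v" using gaps_mono[OF gf, of u v] True v by simp
      then have "min (f v) (g v) = g v" using u v True by auto
      then show ?thesis using v unfolding Dm_def by force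
    next
      case False
      then have "v < u" using \<open>u \<noteq> v\<close> by simp
      have "g v + 2 * (u - v) \<le> g u" using gaps_mono[OF gg, of v u] \<open>v < u\<close> u by simp
      then have "min (f u) (g u) = f u" using u v \<open>v < u\<close> by auto
      then show ?thesis using u unfolding Dm_def by force
    qed
  qed
qed

lemma prec_step: assumes S: "S \<subseteq> dom_fam k 1 n" and T: "T \<subseteq> dom_fam k 1 n" and P: "prec_fam T S"
  and g: "gaps k q" and q: "Dm k q \<in> ideal_gen k n T"
  shows "Dm k (\<lambda>t. q t + 1) \<in> ideal_gen k n S"
proof -
  obtain g where g1: "vld k 1 n q" "vld k 1 n g" "Dm k g \<in> T" "\<forall>t<k. q t \<le> g t"
    using inI[OF T g] q by blast
  obtain F where F: "F \<in> S" "prec_p (Dm k g) F" using P g1(3) unfolding prec_fam_def by blast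
  obtain p where p: "vld k 1 n p" "F = Dm k p" using F(1) S dom_fam_iff by blast
  have lt: "\<forall>t<k. g t < p t" using prec_p_Dm[OF vld_gaps[OF g1(2)] vld_gaps[OF p(1)]] F(2) p(2) by simp
  have g2: "gaps k (\<lambda>t. q t + 1)" using g unfolding gaps_def by simp
  have le: "\<forall>t<k. q t + 1 \<le> p t" proof (intro allI impI)
    fix t assume "t < k" then have "q t \<le> g t" "g t < p t" using lt g1(4) by auto
    then show "q t + 1 \<le> p t" by linarith
  qed
  have "vld k 1 n (\<lambda>t. q t + 1)" using vld_le[OF p(1) g2 _ le] by simp
  then show ?thesis using inI[OF S g2] p F(1) le by blast
qed



lemma Dm_memI: "t < r \<Longrightarrow> x = f t \<or> x = f t + 1 \<Longrightarrow> x \<in> Dm r f"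
  unfolding Dm_def by auto

lemma core:
  assumes S: "S \<subseteq> dom_fam k 1 n" and T: "T \<subseteq> dom_fam k 1 n" and P: "prec_fam T S"
  and k: "1 \<le> k" and j: "1 \<le> j"
  and a: "vld k 1 n a" "a 0 = j" "Dm k a \<in> ideal_gen k n S" "Dm k a \<notin> ideal_gen k n T"
  and b: "vld k 1 n b" "b 0 = j + 1" "Dm k b \<in> ideal_gen k n S"
  and sig: "\<sigma> \<subseteq> Dm k a" "\<sigma> \<subseteq> Dm k b"
  shows "\<exists>Q. vld k 1 n Q \<and> Q 0 = j \<and> Dm k Q \<in> ideal_gen k n S \<and> Dm k Q \<notin> ideal_gen k n T
     \<and> \<sigma> \<subseteq> Dm k Q \<and> Dm k (shr j k Q) \<in> ideal_gen k n S"
proof -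
  have ga: "gaps k a" and gb: "gaps k b" using a(1) b(1) vld_gaps by auto
  define m where "m = (\<lambda>t. min (a t) (b t))"
  have gm: "gaps k m" unfolding m_def using min_gaps[OF ga gb] .
  have m0: "m 0 = j" using a(2) b(2) by (simp add: m_def)
  have sigm: "\<sigma> \<subseteq> Dm k m" using sig min_Dm[OF ga gb] unfolding m_def by blast
  have blb: "\<forall>t<k. j + 1 + 2*t \<le> b t" using gaps_lb[OF gb] b(2) by auto
  define C where "C = (\<lambda>Q. gaps k Q \<and> Q 0 = j \<and> (\<forall>t<k. m t \<le> Q t \<and> Q t \<le> a t) \<and> \<sigma> \<subseteq> Dm k Q
      \<and> Dm k (shr j k Q) \<in> ideal_gen k n S)"
  define mu where "mu = (\<lambda>Q::nat\<Rightarrow>nat. \<Sum>t<k. Q t)"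
  have Cm: "C m"
  proof -
    have le: "\<forall>t<k. shr j k m t \<le> b t"
    proof (intro allI impI)
      fix t assume t: "t < k"
      show "shr j k m t \<le> b t"
      proof (cases "t < runlen j k m")
        case True then have "m t = j + 2*t" using runlen_props(2) by blast
        then show ?thesis using True blb t by (simp add: shr_def)
      next
        case False then show ?thesis by (simp add: shr_def m_def)
      qed
    qed
    have "Dm k (shr j k m) \<in> ideal_gen k n S"
      using ideal_mono[OF S shr_gaps[OF gm m0] gb _ b(3) le] m0 j by (simp add: shr_def)
    then show ?thesis unfolding C_def using gm m0 sigm by (auto simp: m_def)
  qed
  have bound: "\<forall>Q. C Q \<longrightarrow> mu Q < Suc (mu a)"
  proof (intro allI impI)
    fix Q assume "C Q"
    then have "\<forall>t\<in>{..<k}. Q t \<le> a t" unfolding C_def by auto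
    then have "mu Q \<le> mu a" unfolding mu_def by (metis sum_mono)
    then show "mu Q < Suc (mu a)" by simp
  qed
  obtain Q where Q: "C Q" "\<forall>Q'. C Q' \<longrightarrow> mu Q' \<le> mu Q"
    using ex_has_greatest_nat[of C m mu "Suc (mu a)"] Cm bound by blast
  from Q(1) have gQ: "gaps k Q" and Q0: "Q 0 = j" and Qm: "\<forall>t<k. m t \<le> Q t"
    and Qa: "\<forall>t<k. Q t \<le> a t" and sQ: "\<sigma> \<subseteq> Dm k Q" and shQ: "Dm k (shr j k Q) \<in> ideal_gen k n S"
    unfolding C_def by auto
  have QS: "Dm k Q \<in> ideal_gen k n S" using ideal_mono[OF S gQ ga _ a(3) Qa] Q0 j by simp
  have QT: "Dm k Q \<notin> ideal_gen k n T"
  proof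
    assume QT: "Dm k Q \<in> ideal_gen k n T"
    have Q1: "Dm k (\<lambda>t. Q t + 1) \<in> ideal_gen k n S" using prec_step[OF S T P gQ QT] .
    have g1: "gaps k (\<lambda>t. Q t + 1)" using gQ unfolding gaps_def by simp
    have exi: "\<exists>i. i < k \<and> Q i < a i"
    proof (rule ccontr)
      assume "\<not> ?thesis"
      then have "\<And>t. t < k \<Longrightarrow> Q t = a t" using Qa by (meson le_neq_implies_less)
      then have "Dm k Q = Dm k a" by (rule Dm_cong)
      then show False using QT a(4) by simp
    qed
    define i0 where "i0 = (LEAST i. i < k \<and> Q i < a i)"
    have i0: "i0 < k" "Q i0 < a i0" using LeastI_ex[OF exi] unfolding i0_def by auto
    have i0min: "\<And>i. i < i0 \<Longrightarrow> \<not> Q i < a i"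
      using not_less_Least[of _ "\<lambda>i. i < k \<and> Q i < a i"] i0(1) unfolding i0_def
      by (meson less_trans)
    define s where "s = runlen j k Q"
    have sk: "s \<le> k" unfolding s_def using runlen_props(1) .
    have runeq: "\<And>t. t < s \<Longrightarrow> a t = Q t"
    proof -
      fix t assume t: "t < s"
      then have Qt: "Q t = j + 2*t" unfolding s_def using runlen_props(2) by blast
      have tk: "t < k" using t sk by simp
      have "j + 1 + 2*t \<le> b t" using blb tk by blast
      moreover have "min (a t) (b t) \<le> Q t" using Qm tk unfolding m_def by blast
      ultimately have "a t \<le> Q t" using Qt by (simp add: min_def split: if_splits)
      then show "a t = Q t" using Qa tk le_antisym by blast
    qed
    have s_i0: "s \<le> i0"
    proof (rule ccontr)
      assume "\<not> s \<le> i0" then have "a i0 = Q i0" using runeq by simp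
      then show False using i0 by simp
    qed
    have s1: "1 \<le> s" unfolding s_def using runlen_pos[of Q j k] Q0 k by simp
    have ex1: "\<exists>i. i0 \<le> i \<and> (i + 1 = k \<or> Q (i + 1) \<noteq> Q i + 2)"
      using i0(1) by (intro exI[of _ "k - 1"]) auto
    define i1 where "i1 = (LEAST i. i0 \<le> i \<and> (i + 1 = k \<or> Q (i + 1) \<noteq> Q i + 2))"
    have i1: "i0 \<le> i1" "i1 + 1 = k \<or> Q (i1 + 1) \<noteq> Q i1 + 2"
      using LeastI_ex[OF ex1] unfolding i1_def by auto
    have i1k: "i1 < k"
    proof -
      have "i1 \<le> k - 1" unfolding i1_def by (rule Least_le) (use i0(1) in auto)
      then show ?thesis using k by simp
    qed
    have i1min: "\<And>t. t < i1 \<Longrightarrow> i0 \<le> t \<Longrightarrow> Q (t + 1) = Q t + 2"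
    proof -
      fix t assume "t < i1" "i0 \<le> t"
      then have "\<not> (i0 \<le> t \<and> (t + 1 = k \<or> Q (t + 1) \<noteq> Q t + 2))"
        using not_less_Least[of t "\<lambda>i. i0 \<le> i \<and> (i + 1 = k \<or> Q (i + 1) \<noteq> Q i + 2)"]
        unfolding i1_def by blast
      then show "Q (t + 1) = Q t + 2" using \<open>i0 \<le> t\<close> by blast
    qed
    have blk: "\<And>t. i0 \<le> t \<Longrightarrow> t \<le> i1 \<Longrightarrow> Q t = Q i0 + 2*(t - i0)"
    proof -
      fix t show "i0 \<le> t \<Longrightarrow> t \<le> i1 \<Longrightarrow> Q t = Q i0 + 2*(t - i0)"
      proof (induction t)
        case 0 then show ?case by simp
      next
        case (Suc t)
        show ?case
        proof (cases "Suc t = i0")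
          case True then show ?thesis by simp
        next
          case False
          then have "i0 \<le> t" "t < i1" using Suc.prems by auto
          then have "Q (t + 1) = Q t + 2" using i1min by blast
          moreover have "Q t = Q i0 + 2*(t - i0)" using Suc.IH \<open>i0 \<le> t\<close> \<open>t < i1\<close> by simp
          ultimately show ?thesis using \<open>i0 \<le> t\<close> by (simp add: Suc_diff_le)
        qed
      qed
    qed
    have aft: "i1 + 1 < k \<Longrightarrow> Q i1 + 3 \<le> Q (i1 + 1)"
    proof -
      assume h: "i1 + 1 < k"
      then have "Q i1 + 2 \<le> Q (i1 + 1)" using gQ unfolding gaps_def by blast
      moreover have "Q (i1 + 1) \<noteq> Q i1 + 2" using i1(2) h by simp
      ultimately show ?thesis by simp
    qed
    define Q' where "Q' = (\<lambda>t. if i0 \<le> t \<and> t \<le> i1 then Q t + 1 else Q t)"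
    have gQ': "gaps k Q'"
      unfolding gaps_def
    proof (intro allI impI)
      fix i assume i: "i + 1 < k"
      have gi: "Q i + 2 \<le> Q (i + 1)" using gQ i unfolding gaps_def by blast
      show "Q' i + 2 \<le> Q' (i + 1)"
      proof (cases "i0 \<le> i \<and> i \<le> i1")
        case True
        show ?thesis
        proof (cases "i + 1 \<le> i1")
          case True then show ?thesis using gi \<open>i0 \<le> i \<and> i \<le> i1\<close> by (simp add: Q'_def)
        next
          case False
          then have "i = i1" using True by simp
          then show ?thesis using aft i False by (simp add: Q'_def)
        qed
      next
        case False then show ?thesis using gi by (simp add: Q'_def)
      qed
    qed
    have Q'0: "Q' 0 = j" using s1 s_i0 Q0 by (simp add: Q'_def)
    have Q'ge: "\<And>t. Q t \<le> Q' t" by (simp add: Q'_def)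
    have Q'a: "\<forall>t<k. Q' t \<le> a t"
    proof (intro allI impI)
      fix t assume t: "t < k"
      show "Q' t \<le> a t"
      proof (cases "i0 \<le> t \<and> t \<le> i1")
        case True
        have "a i0 + 2 * (t - i0) \<le> a t" using gaps_mono[OF ga, of i0 t] True t by simp
        moreover have "Q t = Q i0 + 2*(t - i0)" using blk True by blast
        ultimately show ?thesis using i0(2) True by (simp add: Q'_def)
      next
        case False then have "Q' t = Q t" by (simp add: Q'_def)
        then show ?thesis using Qa t by simp
      qed
    qed
    have sQ': "\<sigma> \<subseteq> Dm k Q'"
    proof
      fix x assume xs: "x \<in> \<sigma>"
      then have "x \<in> Dm k Q" using sQ by blast
      then obtain t where t: "t < k" "x = Q t \<or> x = Q t + 1" unfolding Dm_def by auto
      show "x \<in> Dm k Q'"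
      proof (cases "i0 \<le> t \<and> t \<le> i1")
        case False
        then have "Q' t = Q t" by (simp add: Q'_def)
        then show ?thesis using t Dm_memI[of t k x Q'] by simp
      next
        case inb: True
        show ?thesis
        proof (cases "x = Q t + 1")
          case True then have "x = Q' t" using inb by (simp add: Q'_def)
          then show ?thesis using t Dm_memI[of t k x Q'] by simp
        next
          case False
          then have xq: "x = Q t" using t by simp
          show ?thesis
          proof (cases "t = i0")
            case False
            then have t1: "i0 \<le> t - 1" "t - 1 \<le> i1" "t - 1 < k" using inb t by auto
            have "Q t = Q i0 + 2*(t - i0)" using blk inb by blast
            moreover have "Q (t - 1) = Q i0 + 2*(t - 1 - i0)" using blk t1 by blast
            ultimately have "Q' (t - 1) + 1 = x" using t1 xq inb False by (simp add: Q'_def)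
            then show ?thesis using t1(3) Dm_memI[of "t - 1" k x Q'] by simp
          next
            case True
            have "x \<in> Dm k a" using sig xs by blast
            then obtain u where u: "u < k" "x = a u \<or> x = a u + 1" unfolding Dm_def by auto
            have "u < i0"
            proof (rule ccontr)
              assume "\<not> u < i0"
              then have "a i0 + 2 * (u - i0) \<le> a u" using gaps_mono[OF ga, of i0 u] u by simp
              then show False using u xq True i0(2) by auto
            qed
            then have "a u + 2 * (i0 - 1 - u) \<le> a (i0 - 1)" using gaps_mono[OF ga, of u "i0 - 1"] i0 by simp
            moreover have "Q (i0 - 1) + 2 \<le> Q i0" using gQ \<open>u < i0\<close> i0(1) unfolding gaps_def
              by (metis Suc_eq_plus1 Suc_pred' gr_zeroI less_nat_zero_code)
            ultimately have "Q (i0 - 1) < a (i0 - 1)" using u xq True by auto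
            then show ?thesis using i0min[of "i0 - 1"] \<open>u < i0\<close> by simp
          qed
        qed
      qed
    qed
    have rl: "runlen j k Q' = s"
    proof (rule runlen_eq)
      show "s \<le> k" by (rule sk)
      show "\<forall>t<s. Q' t = j + 2 * t"
        using runlen_props(2)[of _ j k Q] s_i0 unfolding s_def Q'_def by auto
      show "Q' s \<noteq> j + 2 * s" if "s < k"
      proof -
        have "Q 0 + 2 * s \<le> Q s" using gaps_lb[OF gQ that] .
        moreover have "Q s \<noteq> j + 2 * s" using runlen_props(3)[of j k Q] that unfolding s_def by simp
        ultimately show ?thesis using Q'ge[of s] Q0 by linarith
      qed
    qed
    have shle: "\<forall>t<k. shr j k Q' t \<le> Q t + 1"
    proof (intro allI impI)
      fix t assume t: "t < k"
      show "shr j k Q' t \<le> Q t + 1"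
      proof (cases "t < s")
        case True then have "Q' t = Q t" using s_i0 by (simp add: Q'_def)
        then show ?thesis using True rl by (simp add: shr_def)
      next
        case False then show ?thesis using rl by (simp add: shr_def Q'_def)
      qed
    qed
    have shQ': "Dm k (shr j k Q') \<in> ideal_gen k n S"
      using ideal_mono[OF S shr_gaps[OF gQ' Q'0] g1 _ Q1 shle] Q'0 j by (simp add: shr_def)
    have "C Q'" unfolding C_def using gQ' Q'0 Qm Q'ge Q'a sQ' shQ' by (meson le_trans)
    moreover have "mu Q < mu Q'"
      unfolding mu_def
    proof (rule sum_strict_mono_ex1)
      show "\<forall>x\<in>{..<k}. Q x \<le> Q' x" using Q'ge by blast
      show "\<exists>x\<in>{..<k}. Q x < Q' x" using i0(1) i1(1) by (intro bexI[of _ i0]) (auto simp: Q'_def)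
    qed simp
    ultimately show False using Q(2) by force
  qed
  have "vld k 1 n Q" using vld_le[OF a(1) gQ _ Qa] Q0 j by simp
  then show ?thesis using Q0 QS QT sQ shQ by blast
qed



lemma head_split: assumes "1 \<le> k" "f 0 = i" shows "Dm k f = {i..i + 2*1 - 1} \<union> Dm (k - 1) (\<lambda>t. f (t + 1))"
proof -
  have "Dm 1 f = {i..i + 2*1 - 1}" using block_Dm[of 1 f i] assms(2) by simp
  then show ?thesis using split_Dm[OF assms(1), of f] by simp
qed

lemma tail_vld: assumes "vld k 1 n f" "1 \<le> k" shows "vld (k - 1) (f 0 + 2) n (\<lambda>t. f (t + 1))"
  using assms unfolding vld_def gaps_def
  by (auto simp: Suc_diff_Suc)

lemma drop_vld: assumes "vld k 1 n f" "l \<le> k" "l < k \<Longrightarrow> m \<le> f l" shows "vld (k - l) m n (\<lambda>t. f (t + l))"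
  unfolding vld_def gaps_def
proof (intro conjI impI allI)
  assume "0 < k - l"
  then show "m \<le> f (0 + l)" using assms(3) by simp
  have "k - l - 1 + l = k - 1" using \<open>0 < k - l\<close> by simp
  then show "f (k - l - 1 + l) + 1 \<le> n" using assms(1) \<open>0 < k - l\<close> unfolding vld_def by simp
next
  fix i assume "i + 1 < k - l"
  then have "(i + l) + 1 < k" by simp
  then have "f (i + l) + 2 \<le> f (i + l + 1)" using assms(1) unfolding vld_def gaps_def by blast
  then show "f (i + l) + 2 \<le> f (i + 1 + l)" by (simp add: ac_simps)
qed

theorem lemma3p9:
  fixes k n j :: nat and S T :: "nat set set"
  assumes "1 \<le> k" and "2 * k \<le> n"
    and "antichain_in k n S" and "antichain_in k n T"
    and "prec_fam T S"
    and "1 \<le> j"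
    and "Dcx k n S T (j + 1) \<noteq> {}"
  shows "Dcx k n S T j \<inter> Dcx k n S T (j + 1) =
         (\<Union>l\<in>{1..k}. join (Gamma k n S T j l) (simplex {j + 1..j + 2*l - 1}))"
proof -
  have S: "S \<subseteq> dom_fam k 1 n" and T: "T \<subseteq> dom_fam k 1 n"
    using assms(3,4) unfolding antichain_in_def by auto
  note k = assms(1) and j = assms(6) and P = assms(5)
  have j1: "1 \<le> j + 1" by simp
  show ?thesis
  proof (intro equalityI subsetI)
    fix \<sigma> assume "\<sigma> \<in> Dcx k n S T j \<inter> Dcx k n S T (j + 1)"
    then have d1: "\<sigma> \<in> Dcx k n S T j" and d2: "\<sigma> \<in> Dcx k n S T (j + 1)" by auto
    obtain H1 where H1: "H1 \<in> dom_fam (k - 1) (j + 2) n" "{j..j + 2*1 - 1} \<union> H1 \<in> ideal_gen k n S"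
      "{j..j + 2*1 - 1} \<union> H1 \<notin> ideal_gen k n T" "\<sigma> \<subseteq> H1 \<union> {j..j + 1}"
      using Dcx_mem[OF S T k j] d1 by blast
    obtain H2 where H2: "H2 \<in> dom_fam (k - 1) (j + 1 + 2) n" "{j + 1..j + 1 + 2*1 - 1} \<union> H2 \<in> ideal_gen k n S"
      "{j + 1..j + 1 + 2*1 - 1} \<union> H2 \<notin> ideal_gen k n T" "\<sigma> \<subseteq> H2 \<union> {j + 1..j + 1 + 1}"
      using Dcx_mem[OF S T k j1] d2 by blast
    obtain h1 where h1: "vld (k - 1) (j + 2) n h1" "H1 = Dm (k - 1) h1" using H1(1) dom_fam_iff by blast
    obtain h2 where h2: "vld (k - 1) (j + 1 + 2) n h2" "H2 = Dm (k - 1) h2" using H2(1) dom_fam_iff by blast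
    define a where "a = cat j 1 h1"
    define b where "b = cat (j + 1) 1 h2"
    have ga: "gaps k a" unfolding a_def
      by (rule cat_gaps) (use h1(1) in \<open>auto simp: vld_def\<close>)
    have gb: "gaps k b" unfolding b_def
      by (rule cat_gaps) (use h2(1) in \<open>auto simp: vld_def\<close>)
    have Da: "Dm k a = {j..j + 2*1 - 1} \<union> H1" unfolding a_def h1(2) using cat_Dm[of 1 k] k by simp
    have Db: "Dm k b = {j + 1..j + 1 + 2*1 - 1} \<union> H2" unfolding b_def h2(2) using cat_Dm[of 1 k] k by simp
    have a0: "a 0 = j" and b0: "b 0 = j + 1" by (simp_all add: a_def b_def cat_def)
    have aS: "Dm k a \<in> ideal_gen k n S" and aT: "Dm k a \<notin> ideal_gen k n T"
      and bS: "Dm k b \<in> ideal_gen k n S" and bT: "Dm k b \<notin> ideal_gen k n T"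
      using H1 H2 Da Db by auto
    have va: "vld k 1 n a" using inI[OF S ga] aS by blast
    have vb: "vld k 1 n b" using inI[OF S gb] bS by blast
    have sa: "\<sigma> \<subseteq> Dm k a" using H1(4) Da by auto
    have sb: "\<sigma> \<subseteq> Dm k b" using H2(4) Db by auto
    obtain Q where Q: "vld k 1 n Q" "Q 0 = j" "Dm k Q \<in> ideal_gen k n S" "Dm k Q \<notin> ideal_gen k n T"
      "\<sigma> \<subseteq> Dm k Q" "Dm k (shr j k Q) \<in> ideal_gen k n S"
      using core[OF S T P k j va a0 aS aT vb b0 bS sa sb] by blast
    define l where "l = runlen j k Q"
    have l1: "1 \<le> l" unfolding l_def using runlen_pos[of Q j k] Q(2) k by simp
    have lk: "l \<le> k" unfolding l_def by (rule runlen_props(1))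
    have run: "\<forall>t<l. Q t = j + 2 * t" unfolding l_def using runlen_props(2) by blast
    define H0 where "H0 = Dm (k - l) (\<lambda>t. Q (t + l))"
    have gQ: "gaps k Q" using Q(1) vld_gaps by blast
    have "vld (k - l) (j + 2*l + 1) n (\<lambda>t. Q (t + l))"
    proof (rule drop_vld[OF Q(1) lk])
      assume lk': "l < k"
      have "Q 0 + 2 * l \<le> Q l" using gaps_lb[OF gQ lk'] .
      moreover have "Q l \<noteq> j + 2 * l" using runlen_props(3)[of j k Q] lk' unfolding l_def by simp
      ultimately show "j + 2*l + 1 \<le> Q l" using Q(2) by simp
    qed
    then have H0dom: "H0 \<in> dom_fam (k - l) (j + 2*l + 1) n" unfolding H0_def using dom_fam_iff by blast
    have DQ: "Dm k Q = {j..j + 2*l - 1} \<union> H0"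
      unfolding H0_def using split_Dm[OF lk, of Q] block_Dm[OF l1 run] by simp
    have sh_run: "\<forall>t<l. shr j k Q t = j + 1 + 2 * t" using run unfolding shr_def l_def by simp
    have sh_tail: "(\<lambda>t. shr j k Q (t + l)) = (\<lambda>t. Q (t + l))" unfolding shr_def l_def by auto
    have DP: "Dm k (shr j k Q) = {j + 1..j + 1 + 2*l - 1} \<union> H0"
      unfolding H0_def using split_Dm[OF lk, of "shr j k Q"] block_Dm[OF l1 sh_run] sh_tail by simp
    have jn: "j \<notin> \<sigma>"
    proof
      assume "j \<in> \<sigma>"
      then have "j \<in> Dm k b" using sb by blast
      moreover have "vld k (j + 1) n b" using vb b0 k unfolding vld_def by simp
      ultimately show False using Dm_sub by fastforce
    qed
    have "\<sigma> \<subseteq> H0 \<union> {j + 1..j + 2*l - 1}"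
    proof
      fix x assume "x \<in> \<sigma>"
      then have "x \<in> {j..j + 2*l - 1} \<union> H0" "x \<noteq> j" using Q(5) DQ jn by auto
      then show "x \<in> H0 \<union> {j + 1..j + 2*l - 1}" by auto
    qed
    then have "\<sigma> \<in> join (Gamma k n S T j l) (simplex {j + 1..j + 2*l - 1})"
      using Gamma_mem[OF S T l1 lk j] H0dom DP DQ Q(3,4,6) by metis
    then show "\<sigma> \<in> (\<Union>l\<in>{1..k}. join (Gamma k n S T j l) (simplex {j + 1..j + 2*l - 1}))"
      using l1 lk by auto
  next
    fix \<sigma> assume "\<sigma> \<in> (\<Union>l\<in>{1..k}. join (Gamma k n S T j l) (simplex {j + 1..j + 2*l - 1}))"
    then obtain l where l: "1 \<le> l" "l \<le> k" and sg: "\<sigma> \<in> join (Gamma k n S T j l) (simplex {j + 1..j + 2*l - 1})"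
      by auto
    obtain H where H: "H \<in> dom_fam (k - l) (j + 2*l + 1) n" "{j + 1..j + 1 + 2*l - 1} \<union> H \<in> ideal_gen k n S"
      "{j..j + 2*l - 1} \<union> H \<notin> ideal_gen k n T" "\<sigma> \<subseteq> H \<union> {j + 1..j + 2*l - 1}"
      using Gamma_mem[OF S T l j] sg by blast
    obtain h where h: "vld (k - l) (j + 2*l + 1) n h" "H = Dm (k - l) h" using H(1) dom_fam_iff by blast
    define p where "p = cat (j + 1) l h"
    define q where "q = cat j l h"
    have gp: "gaps k p" unfolding p_def by (rule cat_gaps) (use h(1) in \<open>auto simp: vld_def\<close>)
    have gq: "gaps k q" unfolding q_def by (rule cat_gaps) (use h(1) in \<open>auto simp: vld_def\<close>)
    have Dp: "Dm k p = {j + 1..j + 1 + 2*l - 1} \<union> H" unfolding p_def h(2) using cat_Dm[OF l] by simp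
    have Dq: "Dm k q = {j..j + 2*l - 1} \<union> H" unfolding q_def h(2) using cat_Dm[OF l] by simp
    have qp: "\<forall>t<k. q t \<le> p t" by (simp add: p_def q_def cat_def)
    have q0: "q 0 = j" and p0: "p 0 = j + 1" using l(1) by (simp_all add: p_def q_def cat_def)
    have pS: "Dm k p \<in> ideal_gen k n S" using H(2) Dp by simp
    have qT: "Dm k q \<notin> ideal_gen k n T" using H(3) Dq by simp
    have qS: "Dm k q \<in> ideal_gen k n S" using ideal_mono[OF S gq gp _ pS qp] q0 j by simp
    have pT: "Dm k p \<notin> ideal_gen k n T"
    proof
      assume "Dm k p \<in> ideal_gen k n T"
      then have "Dm k q \<in> ideal_gen k n T" using ideal_mono[OF T gq gp _ _ qp] q0 j by simp
      then show False using qT by simp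
    qed
    have vq: "vld k 1 n q" using inI[OF S gq] qS by blast
    have vp: "vld k 1 n p" using inI[OF S gp] pS by blast
    have sq: "\<sigma> \<subseteq> Dm k q" using H(4) Dq by auto
    have sp: "\<sigma> \<subseteq> Dm k p"
    proof
      fix x assume "x \<in> \<sigma>"
      then have "x \<in> H \<or> (j + 1 \<le> x \<and> x \<le> j + 2*l - 1)" using H(4) by auto
      then show "x \<in> Dm k p" using Dp by auto
    qed
    have s1: "\<sigma> \<in> Dcx k n S T j"
    proof -
      have dom1: "Dm (k - 1) (\<lambda>t. q (t + 1)) \<in> dom_fam (k - 1) (j + 2) n"
        using tail_vld[OF vq k] q0 dom_fam_iff by metis
      have e: "Dm k q = {j..j + 2*1 - 1} \<union> Dm (k - 1) (\<lambda>t. q (t + 1))" using head_split[of k q j] k q0 by simp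
      show ?thesis unfolding Dcx_mem[OF S T k j]
        by (rule exI[of _ "Dm (k - 1) (\<lambda>t. q (t + 1))"]) (use dom1 e qS qT sq in auto)
    qed
    have s2: "\<sigma> \<in> Dcx k n S T (j + 1)"
    proof -
      have dom1: "Dm (k - 1) (\<lambda>t. p (t + 1)) \<in> dom_fam (k - 1) (j + 1 + 2) n"
        using tail_vld[OF vp k] p0 dom_fam_iff by metis
      have e: "Dm k p = {j + 1..j + 1 + 2*1 - 1} \<union> Dm (k - 1) (\<lambda>t. p (t + 1))" using head_split[of k p "j + 1"] k p0 by simp
      show ?thesis unfolding Dcx_mem[OF S T k j1]
        by (rule exI[of _ "Dm (k - 1) (\<lambda>t. p (t + 1))"]) (use dom1 e pS pT sp in auto)
    qed
    show "\<sigma> \<in> Dcx k n S T j \<inter> Dcx k n S T (j + 1)" using s1 s2 by blast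
  qed
qed


end
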